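(* Let $a>0$, $b>2$ with $r:=a+b/2>4$, and let $u_+=1/2+(1/4-1/r)^{1/2}$. Let $(u(t),v(t))$ solve $$u'=(au^2+(b/2)v^2)(1-u)-u,\qquad v'=(av^2+(b/2)u^2)(1-v)-v,$$ with $u(0)=1$, $v(0)=0$. Then $\lim_{t\to\infty}u(t)=\lim_{t\to\infty}v(t)=u_+$. *)

theory Defs
  imports "HOL-Analysis.Analysis"
begin

end

theory Submission
  imports Defs
begin

lemma integral_deriv_pos:
  fixes p :: "real \<Rightarrow> real"
  assumes cp: "continuous_on {0..} p" and x: "x > 0"
  shows "((\<lambda>t. integral {0..t} p) has_real_derivative p x) (at x)"
proof -
  have "continuous_on {0..x+1} p" using continuous_on_subset[OF cp] by auto
  from integral_has_vector_derivative[OF this, of x] x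
  have "((\<lambda>t. integral {0..t} p) has_real_derivative p x) (at x within {0..x+1})"
    by (simp add: has_real_derivative_iff_has_vector_derivative)
  moreover have "at x within {0..x+1} = at x"
    using x by (intro at_within_interior) auto
  ultimately show ?thesis by simp
qed

lemma integral_cont:
  fixes p :: "real \<Rightarrow> real"
  assumes cp: "continuous_on {0..} p" and t: "t \<ge> 0"
  shows "continuous_on {0..t} (\<lambda>t. integral {0..t} p)"
proof -
  have c: "continuous_on {0..t} p" using continuous_on_subset[OF cp] by auto
  show ?thesis
  proof (rule DERIV_continuous_on)
    fix x assume "x \<in> {0..t}"
    from integral_has_vector_derivative[OF c this]
    show "((\<lambda>t. integral {0..t} p) has_real_derivative p x) (at x within {0..t})"
      by (simp add: has_real_derivative_iff_has_vector_derivative)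
  qed
qed

lemma lin_pos:
  fixes z p D :: "real \<Rightarrow> real"
  assumes cz: "continuous_on {0..} z" and cp: "continuous_on {0..} p"
    and dz: "\<And>t. t > 0 \<Longrightarrow> (z has_real_derivative D t) (at t)"
    and ineq: "\<And>t. t > 0 \<Longrightarrow> D t \<ge> p t * z t" and t: "t \<ge> 0"
  shows "z t \<ge> z 0 * exp (integral {0..t} p)"
proof -
  define P where "P t = integral {0..t} p" for t
  define E where "E t = z t * exp (- P t)" for t
  have "E 0 \<le> E t"
  proof (rule DERIV_nonneg_imp_increasing_open[OF t])
    fix x :: real assume x: "0 < x" "x < t"
    have dP: "(P has_real_derivative p x) (at x)" unfolding P_def
      using integral_deriv_pos[OF cp x(1)] .
    have "(E has_real_derivative D x * exp (- P x) + z x * (exp (- P x) * (- p x))) (at x)"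
      unfolding E_def by (auto intro!: derivative_eq_intros dz dP x(1))
    moreover have "D x * exp (- P x) + z x * (exp (- P x) * (- p x)) \<ge> 0"
    proof -
      have "D x * exp (- P x) + z x * (exp (- P x) * (- p x)) = (D x - p x * z x) * exp (- P x)"
        by (simp add: algebra_simps)
      also have "\<dots> \<ge> 0" using ineq[OF x(1)] by simp
      finally show ?thesis .
    qed
    ultimately show "\<exists>y. (E has_real_derivative y) (at x) \<and> 0 \<le> y" by blast
  next
    have "continuous_on {0..t} z" using continuous_on_subset[OF cz] by auto
    moreover have "continuous_on {0..t} P" unfolding P_def using integral_cont[OF cp t] .
    ultimately show "continuous_on {0..t} E" unfolding E_def
      by (intro continuous_intros) auto
  qed
  hence "z 0 \<le> z t * exp (- P t)" by (simp add: E_def P_def)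
  hence "z 0 * exp (P t) \<le> z t * exp (- P t) * exp (P t)" by simp
  also have "\<dots> = z t" by (simp add: exp_minus field_simps)
  finally show ?thesis by (simp add: P_def)
qed

lemma stay_above:
  fixes y Dy :: "real \<Rightarrow> real"
  assumes ab: "\<alpha> \<le> \<beta>" and cy: "continuous_on {\<alpha>..\<beta>} y"
    and dy: "\<And>x. \<alpha> < x \<Longrightarrow> x < \<beta> \<Longrightarrow> (y has_real_derivative Dy x) (at x)"
    and pos: "\<And>x. \<alpha> < x \<Longrightarrow> x < \<beta> \<Longrightarrow> y x < M \<Longrightarrow> Dy x \<ge> 0"
    and start: "y \<alpha> \<ge> M"
  shows "y \<beta> \<ge> M"
proof (rule ccontr)
  assume neg: "\<not> y \<beta> \<ge> M"
  define A where "A = {\<alpha>..\<beta>} \<inter> y -` {M..}"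
  have clA: "closed A" unfolding A_def by (rule continuous_closed_preimage[OF cy]) auto
  have neA: "A \<noteq> {}" using start ab unfolding A_def by auto
  have bdA: "bdd_above A" unfolding A_def by (auto intro: bdd_aboveI[of _ \<beta>])
  define s where "s = Sup A"
  have sA: "s \<in> A" unfolding s_def by (rule closed_contains_Sup[OF neA bdA clA])
  have sle: "\<And>x. x \<in> A \<Longrightarrow> x \<le> s" unfolding s_def using bdA by (simp add: cSup_upper)
  have s1: "\<alpha> \<le> s" "s \<le> \<beta>" "y s \<ge> M" using sA unfolding A_def by auto
  have "s \<noteq> \<beta>" using s1 neg by auto
  hence s2: "s < \<beta>" using s1 by auto
  have "y s \<le> y \<beta>"
  proof (rule DERIV_nonneg_imp_increasing_open[of s \<beta> y])
    show "s \<le> \<beta>" using s2 by simp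
  next
    fix x assume x: "s < x" "x < \<beta>"
    have "x \<notin> A" using sle x by force
    hence "y x < M" using x s1 unfolding A_def by auto
    thus "\<exists>d. (y has_real_derivative d) (at x) \<and> 0 \<le> d"
    proof -
      have "\<alpha> < x" using x s1 by linarith
      thus ?thesis using dy pos x \<open>y x < M\<close> by blast
    qed
  next
    show "continuous_on {s..\<beta>} y" using continuous_on_subset[OF cy] s1 by auto
  qed
  thus False using s1 neg by simp
qed

lemma reach_stay:
  fixes y Dy :: "real \<Rightarrow> real"
  assumes cy: "continuous_on {0..} y"
    and dy: "\<And>x. 0 < x \<Longrightarrow> (y has_real_derivative Dy x) (at x)"
    and bnd: "\<And>x. 0 < x \<Longrightarrow> y x < M \<Longrightarrow> Dy x \<ge> \<kappa>" and kp: "\<kappa> > 0"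
    and ub: "\<And>x. 0 \<le> x \<Longrightarrow> y x \<le> B"
  shows "\<exists>T. \<forall>t\<ge>T. y t \<ge> M"
proof -
  obtain T where T: "T \<ge> 0" "y T \<ge> M"
  proof (rule ccontr)
    assume "\<not> thesis"
    hence all: "\<And>t. t \<ge> 0 \<Longrightarrow> y t < M" using that by force
    define t where "t = (B - y 0 + 1) / \<kappa>"
    have t0: "t \<ge> 0" unfolding t_def using ub[of 0] kp by simp
    have "(\<lambda>x. y x - \<kappa> * x) 0 \<le> (\<lambda>x. y x - \<kappa> * x) t"
    proof (rule DERIV_nonneg_imp_increasing_open[OF t0])
      fix x :: real assume x: "0 < x" "x < t"
      have "((\<lambda>x. y x - \<kappa> * x) has_real_derivative Dy x - \<kappa>) (at x)"
        by (auto intro!: derivative_eq_intros dy x(1))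
      moreover have "Dy x - \<kappa> \<ge> 0" using bnd[OF x(1) all] x by simp
      ultimately show "\<exists>d. ((\<lambda>x. y x - \<kappa> * x) has_real_derivative d) (at x) \<and> 0 \<le> d" by blast
    next
      have "continuous_on {0..t} y" using continuous_on_subset[OF cy] by auto
      thus "continuous_on {0..t} (\<lambda>x. y x - \<kappa> * x)" by (intro continuous_intros)
    qed
    hence "y t \<ge> y 0 + \<kappa> * t" by simp
    also have "\<kappa> * t = B - y 0 + 1" unfolding t_def using kp by simp
    finally show False using ub[OF t0] by simp
  qed
  have "\<forall>t\<ge>T. y t \<ge> M"
  proof (intro allI impI)
    fix t assume tT: "t \<ge> T"
    show "y t \<ge> M"
    proof (rule stay_above[OF tT, where Dy = Dy])
      show "continuous_on {T..t} y" using continuous_on_subset[OF cy] T by auto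
      fix x assume x: "T < x" "x < t"
      show "(y has_real_derivative Dy x) (at x)" using dy x T by simp
      show "y x < M \<Longrightarrow> 0 \<le> Dy x" using bnd[of x] kp x T by force
    qed (fact T)
  qed
  thus ?thesis by blast
qed


lemma idQ: "4*((a * u^2 + c * v^2) * (1 - u) - u + ((a * v^2 + c * u^2) * (1 - v) - v))
  - (2*(a+c) * (u + v + 1) - (a+c) * ((u + v)^2 + (u + v) + 1)
      + (u - v)^2 * (c - 3 * a) - 4) * (u + v - 1) = (1 - (u-v)^2) * ((a+c) - 4) + 4*(u-v)^2 * (c - 1)"
  for a c u v :: real
  by (simp add: algebra_simps power2_eq_square)

theorem lemma10p1:
  fixes a b :: real and u v :: "real \<Rightarrow> real"
  assumes "a > 0" and "b > 2" and "a + b / 2 > 4"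
    and "\<And>t. t \<ge> 0 \<Longrightarrow> (u has_real_derivative
           ((a * (u t)\<^sup>2 + (b / 2) * (v t)\<^sup>2) * (1 - u t) - u t)) (at t within {0..})"
    and "\<And>t. t \<ge> 0 \<Longrightarrow> (v has_real_derivative
           ((a * (v t)\<^sup>2 + (b / 2) * (u t)\<^sup>2) * (1 - v t) - v t)) (at t within {0..})"
    and "u 0 = 1" and "v 0 = 0"
  shows "(u \<longlongrightarrow> 1 / 2 + sqrt (1 / 4 - 1 / (a + b / 2))) at_top
       \<and> (v \<longlongrightarrow> 1 / 2 + sqrt (1 / 4 - 1 / (a + b / 2))) at_top"
proof -
  define c where "c = b / 2"
  define r where "r = a + c"
  define q where "q = sqrt (1 / 4 - 1 / r)"
  define L where "L = 1 / 2 + q"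
  define U where "U t = (a * (u t)\<^sup>2 + c * (v t)\<^sup>2) * (1 - u t) - u t" for t
  define V where "V t = (a * (v t)\<^sup>2 + c * (u t)\<^sup>2) * (1 - v t) - v t" for t
  have a0: "a > 0" and c1: "c > 1" and r4: "r > 4" using assms by (auto simp: c_def r_def)
  have q0: "q > 0" unfolding q_def using r4 by (simp add: field_simps)
  have qsq: "r * (1/4 - q^2) = 1" unfolding q_def using r4 by (simp add: field_simps)
  have duw: "\<And>t. t \<ge> 0 \<Longrightarrow> (u has_real_derivative U t) (at t within {0..})"
    using assms(4) by (simp add: U_def c_def)
  have dvw: "\<And>t. t \<ge> 0 \<Longrightarrow> (v has_real_derivative V t) (at t within {0..})"
    using assms(5) by (simp add: V_def c_def)
  have du: "(u has_real_derivative U t) (at t)" if t: "t > 0" for t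
  proof -
    have "(u has_real_derivative U t) (at t within {0<..})"
      by (rule DERIV_subset[OF duw]) (use t in auto)
    thus ?thesis using at_within_open[of t "{0<..}"] t by simp
  qed
  have dv: "(v has_real_derivative V t) (at t)" if t: "t > 0" for t
  proof -
    have "(v has_real_derivative V t) (at t within {0<..})"
      by (rule DERIV_subset[OF dvw]) (use t in auto)
    thus ?thesis using at_within_open[of t "{0<..}"] t by simp
  qed
  have cu: "continuous_on {0..} u" by (rule DERIV_continuous_on[OF duw]) auto
  have cv: "continuous_on {0..} v" by (rule DERIV_continuous_on[OF dvw]) auto
  have u0: "u 0 = 1" and v0: "v 0 = 0" using assms by auto

  have I1: "u t \<le> 1" if "t \<ge> 0" for t
  proof -
    have "(1 - u 0) * exp (integral {0..t} (\<lambda>t. -(1 + a*(u t)^2 + c*(v t)^2))) \<le> 1 - u t"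
    proof (rule lin_pos[where D = "\<lambda>t. - U t"])
      show "continuous_on {0..} (\<lambda>t. 1 - u t)" using cu by (intro continuous_intros)
      show "continuous_on {0..} (\<lambda>t. -(1 + a*(u t)^2 + c*(v t)^2))" using cu cv by (intro continuous_intros)
      fix t :: real assume t: "t > 0"
      show "((\<lambda>t. 1 - u t) has_real_derivative - U t) (at t)"
        using du[OF t] by (auto intro!: derivative_eq_intros)
      show "-(1 + a*(u t)^2 + c*(v t)^2) * (1 - u t) \<le> - U t"
        unfolding U_def by (simp add: algebra_simps)
    qed (use that in auto)
    thus ?thesis using u0 by simp
  qed
  have I4: "u t \<ge> 0" if "t \<ge> 0" for t
  proof -
    have "u 0 * exp (integral {0..t} (\<lambda>t. -(1 + a*(u t)^2 + c*(v t)^2))) \<le> u t"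
    proof (rule lin_pos[where D = "U"])
      show "continuous_on {0..} u" using cu .
      show "continuous_on {0..} (\<lambda>t. -(1 + a*(u t)^2 + c*(v t)^2))" using cu cv by (intro continuous_intros)
      fix t :: real assume t: "t > 0"
      show "(u has_real_derivative U t) (at t)" using du[OF t] .
      have "0 \<le> a*(u t)^2 + c*(v t)^2" using a0 c1 by simp
      thus "-(1 + a*(u t)^2 + c*(v t)^2) * u t \<le> U t"
        unfolding U_def by (simp add: algebra_simps)
    qed (use that in auto)
    thus ?thesis using u0 by (smt (verit) exp_gt_zero mult_pos_pos)
  qed
  have I3: "v t \<le> 1" if "t \<ge> 0" for t
  proof -
    have "(1 - v 0) * exp (integral {0..t} (\<lambda>t. -(1 + a*(v t)^2 + c*(u t)^2))) \<le> 1 - v t"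
    proof (rule lin_pos[where D = "\<lambda>t. - V t"])
      show "continuous_on {0..} (\<lambda>t. 1 - v t)" using cv by (intro continuous_intros)
      show "continuous_on {0..} (\<lambda>t. -(1 + a*(v t)^2 + c*(u t)^2))" using cu cv by (intro continuous_intros)
      fix t :: real assume t: "t > 0"
      show "((\<lambda>t. 1 - v t) has_real_derivative - V t) (at t)"
        using dv[OF t] by (auto intro!: derivative_eq_intros)
      show "-(1 + a*(v t)^2 + c*(u t)^2) * (1 - v t) \<le> - V t"
        unfolding V_def by (simp add: algebra_simps)
    qed (use that in auto)
    thus ?thesis using v0 by (smt (verit) exp_gt_zero mult_pos_pos)
  qed
  have I2: "v t \<ge> 0" if "t \<ge> 0" for t
  proof -
    have "v 0 * exp (integral {0..t} (\<lambda>t. -(1 + a*(v t)^2 + c*(u t)^2))) \<le> v t"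
    proof (rule lin_pos[where D = "V"])
      show "continuous_on {0..} v" using cv .
      show "continuous_on {0..} (\<lambda>t. -(1 + a*(v t)^2 + c*(u t)^2))" using cu cv by (intro continuous_intros)
      fix t :: real assume t: "t > 0"
      show "(v has_real_derivative V t) (at t)" using dv[OF t] .
      have "0 \<le> a*(v t)^2 + c*(u t)^2" using a0 c1 by simp
      thus "-(1 + a*(v t)^2 + c*(u t)^2) * v t \<le> V t"
        unfolding V_def by (simp add: algebra_simps)
    qed (use that in auto)
    thus ?thesis using v0 by simp
  qed
  define g where "g t = a * (u t + v t - (u t)^2 - u t * v t - (v t)^2) - c * (u t + v t - u t * v t) - 1" for t
  have I5: "v t \<le> u t" if "t \<ge> 0" for t
  proof -
    have "(u 0 - v 0) * exp (integral {0..t} g) \<le> u t - v t"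
    proof (rule lin_pos[where D = "\<lambda>t. U t - V t"])
      show "continuous_on {0..} (\<lambda>t. u t - v t)" using cu cv by (intro continuous_intros)
      show "continuous_on {0..} g" unfolding g_def using cu cv by (intro continuous_intros)
      fix t :: real assume t: "t > 0"
      show "((\<lambda>t. u t - v t) has_real_derivative U t - V t) (at t)"
        using du[OF t] dv[OF t] by (auto intro!: derivative_eq_intros)
      show "g t * (u t - v t) \<le> U t - V t"
        unfolding U_def V_def g_def by (simp add: algebra_simps power2_eq_square)
    qed (use that in auto)
    hence "exp (integral {0..t} g) \<le> u t - v t" using u0 v0 by simp
    moreover have "exp (integral {0..t} g) > 0" by simp
    ultimately show ?thesis by linarith
  qed
  define Q where "Q t = (2 * r * (u t + v t + 1) - r * ((u t + v t)^2 + (u t + v t) + 1)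
      + (u t - v t)^2 * (c - 3 * a) - 4) / 4" for t
  have I6: "u t + v t \<ge> 1" if "t \<ge> 0" for t
  proof -
    have "(u 0 + v 0 - 1) * exp (integral {0..t} Q) \<le> u t + v t - 1"
    proof (rule lin_pos[where D = "\<lambda>t. U t + V t"])
      show "continuous_on {0..} (\<lambda>t. u t + v t - 1)" using cu cv by (intro continuous_intros)
      show "continuous_on {0..} Q" unfolding Q_def using cu cv by (intro continuous_intros) auto
      fix t :: real assume t: "t > 0"
      show "((\<lambda>t. u t + v t - 1) has_real_derivative U t + V t) (at t)"
        using du[OF t] dv[OF t] by (auto intro!: derivative_eq_intros)
      define d where "d = u t - v t"
      have id: "4 * (U t + V t) - (4 * Q t) * (u t + v t - 1) = (1 - d^2) * (r - 4) + 4 * d^2 * (c - 1)"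
      proof -
        have q4: "4 * Q t = 2*(a+c) * (u t + v t + 1) - (a+c) * ((u t + v t)^2 + (u t + v t) + 1)
      + (u t - v t)^2 * (c - 3 * a) - 4" by (simp add: Q_def r_def)
        show ?thesis unfolding q4 U_def V_def d_def r_def by (rule idQ)
      qed
      have "0 \<le> u t" "u t \<le> 1" "0 \<le> v t" "v t \<le> 1" using I1 I2 I3 I4 t by auto
      hence "\<bar>d\<bar> \<le> 1" unfolding d_def by linarith
      hence "d^2 \<le> 1" by (simp add: abs_square_le_1)
      hence "(1 - d^2) * (r - 4) + 4 * d^2 * (c - 1) \<ge> 0" using r4 c1 by simp
      thus "Q t * (u t + v t - 1) \<le> U t + V t" using id by simp
    qed (use that in auto)
    thus ?thesis using u0 v0 by simp
  qed
  have Uub: "U t \<le> u t * (r * (u t * (1 - u t)) - 1)" if t: "t > 0" for t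
  proof -
    have "v t ^ 2 \<le> u t ^ 2" using I2[of t] I5[of t] t by (intro power_mono) auto
    hence "c * v t ^ 2 \<le> c * u t ^ 2" using c1 by simp
    hence "(a * (u t)\<^sup>2 + c * (v t)\<^sup>2) * (1 - u t) \<le> (a * (u t)\<^sup>2 + c * (u t)\<^sup>2) * (1 - u t)"
      using I1[of t] t by (intro mult_right_mono) auto
    thus ?thesis unfolding U_def r_def by (simp add: algebra_simps power2_eq_square)
  qed
  have Vlb: "V t \<ge> v t * (r * (v t * (1 - v t)) - 1)" if t: "t > 0" for t
  proof -
    have "v t ^ 2 \<le> u t ^ 2" using I2[of t] I5[of t] t by (intro power_mono) auto
    hence "c * v t ^ 2 \<le> c * u t ^ 2" using c1 by simp
    hence "(a * (v t)\<^sup>2 + c * (v t)\<^sup>2) * (1 - v t) \<le> (a * (v t)\<^sup>2 + c * (u t)\<^sup>2) * (1 - v t)"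
      using I3[of t] t by (intro mult_right_mono) auto
    thus ?thesis unfolding V_def r_def by (simp add: algebra_simps power2_eq_square)
  qed
  define \<delta> where "\<delta> = min ((r - 4) / 32) ((c - 1) / 4)"
  have \<delta>0: "\<delta> > 0" unfolding \<delta>_def using r4 c1 by simp
  have Vphi: "V t \<ge> \<delta>" if t: "t > 0" and vh: "v t \<le> 1/2" for t
  proof -
    define w where "w = v t"
    have w0: "0 \<le> w" "w \<le> 1/2" using I2[of t] t vh by (auto simp: w_def)
    have "(1 - w)^2 \<le> u t ^ 2" using I6[of t] t w0 by (intro power_mono) (auto simp: w_def)
    hence "c * (1 - w)^2 \<le> c * u t ^ 2" using c1 by simp
    hence "(a * w^2 + c * (1 - w)^2) * (1 - w) \<le> (a * w^2 + c * (u t)\<^sup>2) * (1 - w)"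
      using w0 by (intro mult_right_mono) auto
    hence "V t \<ge> (a * w^2 + c * (1 - w)^2) * (1 - w) - w" unfolding V_def w_def by simp
    also have "(a * w^2 + c * (1 - w)^2) * (1 - w) - w
        = (r - 4) * (w^2 * (1 - w)) + (c - 1) * ((1 - w) * (1 - 2 * w)) + ((1 - w)^4 - w^4)"
      unfolding r_def by (simp add: algebra_simps power2_eq_square power4_eq_xxxx)
    finally have V1: "V t \<ge> (r - 4) * (w^2 * (1 - w)) + (c - 1) * ((1 - w) * (1 - 2 * w)) + ((1 - w)^4 - w^4)" .
    have T1: "(r - 4) * (w^2 * (1 - w)) \<ge> 0" using r4 w0 by simp
    have T2: "(c - 1) * ((1 - w) * (1 - 2 * w)) \<ge> 0" using c1 w0 by simp
    have "w^4 \<le> (1 - w)^4" using w0 by (intro power_mono) auto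
    hence T3: "(1 - w)^4 - w^4 \<ge> 0" by simp
    show ?thesis
    proof (cases "w \<le> 1/4")
      case True
      have "(3/4) * (1/2) \<le> (1 - w) * (1 - 2 * w)" using True w0 by (intro mult_mono) auto
      hence "(c - 1) * ((3/4) * (1/2)) \<le> (c - 1) * ((1 - w) * (1 - 2 * w))" using c1 by (intro mult_left_mono) auto
      moreover have "(c - 1) / 4 \<le> (c - 1) * ((3/4) * (1/2))" using c1 by simp
      ultimately have "(c - 1) / 4 \<le> (c - 1) * ((1 - w) * (1 - 2 * w))" by linarith
      thus ?thesis using V1 T1 T3 unfolding \<delta>_def by linarith
    next
      case False
      have "(1/16) * (1/2) \<le> w^2 * (1 - w)"
      proof (rule mult_mono)
        have "(1/4::real)^2 \<le> w^2" using False by (intro power_mono) auto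
        thus "1/16 \<le> w^2" by (simp add: power2_eq_square)
      qed (use w0 in auto)
      hence "(r - 4) * ((1/16) * (1/2)) \<le> (r - 4) * (w^2 * (1 - w))" using r4 by (intro mult_left_mono) auto
      hence "(r - 4) / 32 \<le> (r - 4) * (w^2 * (1 - w))" by simp
      thus ?thesis using V1 T2 T3 unfolding \<delta>_def by linarith
    qed
  qed
  have Ulim: "\<exists>T. \<forall>t\<ge>T. u t \<le> L + \<epsilon>" if e: "\<epsilon> > 0" for \<epsilon>
  proof -
    have "\<exists>T. \<forall>t\<ge>T. -(L + \<epsilon>) \<le> - u t"
    proof (rule reach_stay[where Dy = "\<lambda>t. - U t" and \<kappa> = "r * \<epsilon>^2 / 2" and B = 0])
      show "continuous_on {0..} (\<lambda>t. - u t)" using cu by (intro continuous_intros)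
      show "r * \<epsilon>^2 / 2 > 0" using r4 e by simp
      fix x :: real
      show "0 < x \<Longrightarrow> ((\<lambda>t. - u t) has_real_derivative - U x) (at x)"
        using du by (auto intro!: derivative_eq_intros)
      show "0 \<le> x \<Longrightarrow> - u x \<le> 0" using I4 by simp
      assume x: "0 < x" and ux: "- u x < - (L + \<epsilon>)"
      define w where "w = u x"
      have wg: "w - 1/2 > q + \<epsilon>" using ux unfolding w_def L_def by simp
      have "(q + \<epsilon>)^2 \<le> (w - 1/2)^2" using wg q0 e by (intro power_mono) auto
      hence "r * (1/4 - (w - 1/2)^2) \<le> r * (1/4 - (q + \<epsilon>)^2)" using r4 by (intro mult_left_mono) auto
      also have "\<dots> = r * (1/4 - q^2) - r * (2 * q * \<epsilon> + \<epsilon>^2)" by (simp add: algebra_simps power2_eq_square)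
      also have "\<dots> = 1 - r * (2 * q * \<epsilon>) - r * \<epsilon>^2" using qsq by (simp add: algebra_simps)
      also have "\<dots> \<le> 1 - r * \<epsilon>^2" using r4 q0 e by simp
      finally have X: "r * (w * (1 - w)) - 1 \<le> - (r * \<epsilon>^2)" by (simp add: algebra_simps power2_eq_square)
      have "(w - 1/2) * (r * (w * (1 - w)) - 1) \<le> 0"
      proof (rule mult_nonneg_nonpos)
        show "0 \<le> w - 1/2" using wg q0 e by simp
        have "0 \<le> r * \<epsilon>^2" using r4 by simp
        thus "r * (w * (1 - w)) - 1 \<le> 0" using X by linarith
      qed
      hence "w * (r * (w * (1 - w)) - 1) \<le> (r * (w * (1 - w)) - 1) / 2" by (simp add: algebra_simps)
      also have "\<dots> \<le> - (r * \<epsilon>^2) / 2" using X by simp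
      finally show "r * \<epsilon>^2 / 2 \<le> - U x" using Uub[OF x] unfolding w_def by simp
    qed
    then obtain T where "\<forall>t\<ge>T. -(L + \<epsilon>) \<le> - u t" by blast
    hence "\<forall>t\<ge>T. u t \<le> L + \<epsilon>" by (auto simp del: minus_add_distrib)
    thus ?thesis by blast
  qed
  have Vlim: "\<exists>T. \<forall>t\<ge>T. v t \<ge> L - \<epsilon>" if e: "\<epsilon> > 0" for \<epsilon>
  proof -
    define e' where "e' = min \<epsilon> q"
    have e'0: "e' > 0" "e' \<le> q" "e' \<le> \<epsilon>" using e q0 by (auto simp: e'_def)
    have "\<exists>T. \<forall>t\<ge>T. L - e' \<le> v t"
    proof (rule reach_stay[where Dy = V and \<kappa> = "min \<delta> (r * q * e' / 2)" and B = 1])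
      show "continuous_on {0..} v" using cv .
      show "min \<delta> (r * q * e' / 2) > 0" using \<delta>0 r4 q0 e'0 by simp
      fix x :: real
      show "0 < x \<Longrightarrow> (v has_real_derivative V x) (at x)" using dv by simp
      show "0 \<le> x \<Longrightarrow> v x \<le> 1" using I3 by simp
      assume x: "0 < x" and vx: "v x < L - e'"
      show "min \<delta> (r * q * e' / 2) \<le> V x"
      proof (cases "v x \<le> 1/2")
        case True thus ?thesis using Vphi[OF x] by simp
      next
        case False
        define w where "w = v x"
        have wg: "w - 1/2 > 0" "w - 1/2 < q - e'" using vx False unfolding w_def L_def by auto
        have "(w - 1/2)^2 \<le> (q - e')^2" using wg by (intro power_mono) auto
        hence "r * (1/4 - (q - e')^2) \<le> r * (1/4 - (w - 1/2)^2)" using r4 by (intro mult_left_mono) auto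
        moreover have "r * (1/4 - (q - e')^2) = r * (1/4 - q^2) + r * (e' * (2 * q - e'))"
          by (simp add: algebra_simps power2_eq_square)
        moreover have "e' * q \<le> e' * (2 * q - e')" using e'0 by (intro mult_left_mono) auto
        hence "r * (e' * q) \<le> r * (e' * (2 * q - e'))" using r4 by (simp add: mult_left_mono)
        ultimately have X: "r * (w * (1 - w)) - 1 \<ge> r * q * e'"
          using qsq by (simp add: algebra_simps power2_eq_square)
        have "0 \<le> (w - 1/2) * (r * (w * (1 - w)) - 1)"
        proof (rule mult_nonneg_nonneg)
          show "0 \<le> w - 1/2" using wg by simp
          have "0 \<le> r * q * e'" using r4 q0 e'0 by simp
          thus "0 \<le> r * (w * (1 - w)) - 1" using X by linarith
        qed
        moreover have "\<And>X::real. 0 \<le> (w - 1/2) * X \<Longrightarrow> w * X \<ge> X / 2" by (simp add: algebra_simps)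
        ultimately have "w * (r * (w * (1 - w)) - 1) \<ge> (r * (w * (1 - w)) - 1) / 2" by blast
        moreover have "(r * (w * (1 - w)) - 1) / 2 \<ge> r * q * e' / 2" using X by simp
        ultimately show ?thesis using Vlb[OF x] unfolding w_def by linarith
      qed
    qed
    thus ?thesis using e'0 by (meson diff_left_mono order_trans)
  qed
  have conv: "(u \<longlongrightarrow> L) at_top \<and> (v \<longlongrightarrow> L) at_top"
  proof -
    have ev: "eventually (\<lambda>t. \<bar>u t - L\<bar> < \<epsilon> \<and> \<bar>v t - L\<bar> < \<epsilon>) at_top" if e: "\<epsilon> > 0" for \<epsilon>
    proof -
      obtain T1 where T1: "\<forall>t\<ge>T1. u t \<le> L + \<epsilon>/2" using Ulim[of "\<epsilon>/2"] e by auto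
      obtain T2 where T2: "\<forall>t\<ge>T2. v t \<ge> L - \<epsilon>/2" using Vlim[of "\<epsilon>/2"] e by auto
      show ?thesis unfolding eventually_at_top_linorder
      proof (intro exI[of _ "max 0 (max T1 T2)"] allI impI)
        fix t assume t: "t \<ge> max 0 (max T1 T2)"
        have "v t \<le> u t" using I5 t by simp
        thus "\<bar>u t - L\<bar> < \<epsilon> \<and> \<bar>v t - L\<bar> < \<epsilon>" using T1 T2 t e by fastforce
      qed
    qed
    show ?thesis
    proof
      show "(u \<longlongrightarrow> L) at_top" unfolding tendsto_iff dist_real_def
      proof (intro allI impI)
        fix e :: real assume "e > 0"
        from ev[OF this] show "\<forall>\<^sub>F t in at_top. \<bar>u t - L\<bar> < e" by (rule eventually_mono) simp
      qed
      show "(v \<longlongrightarrow> L) at_top" unfolding tendsto_iff dist_real_def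
      proof (intro allI impI)
        fix e :: real assume "e > 0"
        from ev[OF this] show "\<forall>\<^sub>F t in at_top. \<bar>v t - L\<bar> < e" by (rule eventually_mono) simp
      qed
    qed
  qed
  thus ?thesis unfolding L_def q_def r_def c_def .
qed

end
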